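(* Let $G$ be a connected nonbipartite graph with vertex set $\{u_1,\dots,u_m\}$ and $\kappa(G)=\delta(G)>0$, and let $n\ge3$. Let $S\subseteq V(G\times K_n)$ satisfy: (1) $|S|=(n-1)\delta(G)$; (2) $S_i\setminus S\neq\varnothing$ for every $i=1,\dots,m$; (3) $G\times K_n-S$ has no isolated vertex. Then $G\times K_n-S$ is connected.
   Context: The Kronecker product $G_1\times G_2$ has vertex set $V(G_1)\times V(G_2)$, with $(u_1,v_1)(u_2,v_2)$ an edge iff $u_1u_2\in E(G_1)$ and $v_1v_2\in E(G_2)$. Write $V(K_n)=\{v_1,\dots,v_n\}$ and $S_i=\{u_i\}\times V(K_n)$ for $i=1,\dots,m$. *)

theory Defs
  imports Main
begin

text \<open>A finite simple graph is given by a vertex set V and a symmetric, irreflexive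
edge relation E (only edges between vertices of V matter).\<close>

definition simple_graph :: "'a set \<Rightarrow> ('a \<Rightarrow> 'a \<Rightarrow> bool) \<Rightarrow> bool" where
  "simple_graph V E \<longleftrightarrow> finite V \<and> (\<forall>x y. E x y \<longrightarrow> E y x) \<and> (\<forall>x. \<not> E x x)"

definition adj_in :: "'a set \<Rightarrow> ('a \<Rightarrow> 'a \<Rightarrow> bool) \<Rightarrow> 'a \<Rightarrow> 'a \<Rightarrow> bool" where
  "adj_in V E x y \<longleftrightarrow> x \<in> V \<and> y \<in> V \<and> E x y"

definition connected_graph :: "'a set \<Rightarrow> ('a \<Rightarrow> 'a \<Rightarrow> bool) \<Rightarrow> bool" where
  "connected_graph V E \<longleftrightarrow> V \<noteq> {} \<and> (\<forall>x\<in>V. \<forall>y\<in>V. (adj_in V E)\<^sup>*\<^sup>* x y)"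

definition bipartite :: "'a set \<Rightarrow> ('a \<Rightarrow> 'a \<Rightarrow> bool) \<Rightarrow> bool" where
  "bipartite V E \<longleftrightarrow> (\<exists>A \<subseteq> V. \<forall>x\<in>V. \<forall>y\<in>V. E x y \<longrightarrow> (x \<in> A \<longleftrightarrow> y \<notin> A))"

definition degree :: "'a set \<Rightarrow> ('a \<Rightarrow> 'a \<Rightarrow> bool) \<Rightarrow> 'a \<Rightarrow> nat" where
  "degree V E x = card {y \<in> V. E x y}"

definition min_degree :: "'a set \<Rightarrow> ('a \<Rightarrow> 'a \<Rightarrow> bool) \<Rightarrow> nat" where
  "min_degree V E = Min (degree V E ` V)"

text \<open>Vertex connectivity: least number of vertices whose removal leaves a
disconnected graph or a graph with at most one vertex (so kappa(K_m) = m - 1).\<close>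
definition vertex_connectivity :: "'a set \<Rightarrow> ('a \<Rightarrow> 'a \<Rightarrow> bool) \<Rightarrow> nat" where
  "vertex_connectivity V E =
     Min {card X | X. X \<subseteq> V \<and> (\<not> connected_graph (V - X) E \<or> card (V - X) \<le> 1)}"

definition isolated_vertex :: "'a set \<Rightarrow> ('a \<Rightarrow> 'a \<Rightarrow> bool) \<Rightarrow> 'a \<Rightarrow> bool" where
  "isolated_vertex V E x \<longleftrightarrow> x \<in> V \<and> (\<forall>y\<in>V. \<not> E x y)"

definition kron_K_verts :: "'a set \<Rightarrow> nat \<Rightarrow> ('a \<times> nat) set" where
  "kron_K_verts V n = V \<times> {0..<n}"

definition kron_K_edge :: "('a \<Rightarrow> 'a \<Rightarrow> bool) \<Rightarrow> ('a \<times> nat) \<Rightarrow> ('a \<times> nat) \<Rightarrow> bool" where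
  "kron_K_edge E p q \<longleftrightarrow> E (fst p) (fst q) \<and> snd p \<noteq> snd q"

end

theory Submission
  imports Defs
begin


lemma vc_le:
  assumes "finite V" "X \<subseteq> V" "\<not> connected_graph (V - X) E"
  shows "vertex_connectivity V E \<le> card X"
proof -
  have "{card X |X. X \<subseteq> V \<and> (\<not> connected_graph (V - X) E \<or> card (V - X) \<le> 1)} \<subseteq> card ` Pow V"
    by auto
  then have "finite {card X |X. X \<subseteq> V \<and> (\<not> connected_graph (V - X) E \<or> card (V - X) \<le> 1)}"
    using assms(1) finite_subset by blast
  then show ?thesis unfolding vertex_connectivity_def
    by (rule Min_le) (use assms in auto)
qed

lemma deg_ge:
  assumes "simple_graph V E" "u \<in> V"
  shows "min_degree V E \<le> card {y\<in>V. E u y}"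
proof -
  have "finite V" using assms unfolding simple_graph_def by auto
  then show ?thesis unfolding min_degree_def
    using Min_le[of "degree V E ` V" "degree V E u"] assms(2) by (auto simp: degree_def)
qed

lemma card_ins_nbr:
  assumes "simple_graph V E" "u \<in> V"
  shows "card (insert u {y\<in>V. E u y}) = Suc (card {y\<in>V. E u y})"
proof -
  have "finite V" "\<not> E u u" using assms unfolding simple_graph_def by auto
  then show ?thesis by simp
qed

lemma sep:
  assumes "V = P \<union> Q" "P \<inter> Q = {}" "a \<in> P" "a \<notin> X" "b \<in> Q"
    and "X = {u\<in>P. \<exists>v\<in>Q. E u v}"
  shows "\<not> connected_graph (V - X) E"
proof
  assume "connected_graph (V - X) E"
  moreover have "a \<in> V - X" "b \<in> V - X" using assms by auto
  ultimately have r: "(adj_in (V - X) E)\<^sup>*\<^sup>* a b" unfolding connected_graph_def by blast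
  have "z \<in> P - X" if "(adj_in (V - X) E)\<^sup>*\<^sup>* a z" for z
    using that
  proof (induction rule: rtranclp_induct)
    case base then show ?case using assms by auto
  next
    case (step y z)
    then have "z \<in> V" "z \<notin> X" "E y z" "y \<in> P" "y \<notin> X" by (auto simp: adj_in_def)
    then have "z \<notin> Q" using assms(6) by auto
    then show ?case using \<open>z \<in> V\<close> \<open>z \<notin> X\<close> assms(1) by auto
  qed
  from this[OF r] show False using assms by auto
qed



theorem mainTheorem4:
  fixes V :: "'a set" and E :: "'a \<Rightarrow> 'a \<Rightarrow> bool" and n :: nat and S :: "('a \<times> nat) set"
  assumes "simple_graph V E"
    and "connected_graph V E"
    and "\<not> bipartite V E"
    and "vertex_connectivity V E = min_degree V E"
    and "min_degree V E > 0"
    and "n \<ge> 3"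
    and "S \<subseteq> kron_K_verts V n"
    and "card S = (n - 1) * min_degree V E"
    and "\<forall>u\<in>V. ({u} \<times> {0..<n}) - S \<noteq> {}"
    and "\<not> (\<exists>x. isolated_vertex (kron_K_verts V n - S) (kron_K_edge E) x)"
  shows "connected_graph (kron_K_verts V n - S) (kron_K_edge E)"
proof (rule ccontr)
  define R where "R = kron_K_verts V n - S"
  define E' where "E' = kron_K_edge E"
  define \<delta> where "\<delta> = min_degree V E"
  assume "\<not> connected_graph (kron_K_verts V n - S) (kron_K_edge E)"
  then have nc: "\<not> connected_graph R E'" by (simp add: R_def E'_def)
  have fin: "finite V" and sym: "\<And>x y. E x y \<Longrightarrow> E y x" and irr: "\<And>x. \<not> E x x"
    using assms(1) unfolding simple_graph_def by auto
  have Vne: "V \<noteq> {}" using assms(2) unfolding connected_graph_def by auto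
  have Rmem: "\<And>u i. (u,i) \<in> R \<longleftrightarrow> u \<in> V \<and> i < n \<and> (u,i) \<notin> S"
    by (auto simp: R_def kron_K_verts_def)
  have E'iff: "\<And>u i v j. E' (u,i) (v,j) \<longleftrightarrow> E u v \<and> i \<noteq> j"
    by (simp add: E'_def kron_K_edge_def)
  have Rne: "R \<noteq> {}"
  proof -
    obtain u where "u \<in> V" using Vne by auto
    then obtain p where "p \<in> ({u} \<times> {0..<n}) - S" using assms(9) by blast
    then have "p \<in> R" using \<open>u \<in> V\<close> by (auto simp: R_def kron_K_verts_def)
    then show ?thesis by auto
  qed
  from nc Rne obtain x0 y0 where x0R: "x0 \<in> R" and y0R: "y0 \<in> R"
    and nr: "\<not> (adj_in R E')\<^sup>*\<^sup>* x0 y0"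
    unfolding connected_graph_def by blast
  define C where "C = {z. (adj_in R E')\<^sup>*\<^sup>* x0 z}"
  have CR: "C \<subseteq> R"
  proof
    fix z assume "z \<in> C"
    then have "(adj_in R E')\<^sup>*\<^sup>* x0 z" by (simp add: C_def)
    then show "z \<in> R" using x0R by (induction rule: rtranclp_induct) (auto simp: adj_in_def)
  qed
  have Cclos: "\<And>z w. z \<in> C \<Longrightarrow> w \<in> R \<Longrightarrow> E' z w \<Longrightarrow> w \<in> C"
  proof -
    fix z w assume a: "z \<in> C" "w \<in> R" "E' z w"
    then have "adj_in R E' z w" using CR by (auto simp: adj_in_def)
    then show "w \<in> C" using a(1) unfolding C_def by (simp add: rtranclp.rtrancl_into_rtrancl)
  qed
  define D where "D = R - C"
  have x0C: "x0 \<in> C" by (simp add: C_def)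
  have y0D: "y0 \<in> D" using nr y0R by (simp add: C_def D_def)
  define Cu where "Cu = (\<lambda>u. {i. (u,i) \<in> C})"
  define Du where "Du = (\<lambda>u. {i. (u,i) \<in> D})"
  define I where "I = (\<lambda>u. {i. i < n \<and> (u,i) \<notin> S})"
  define ds where "ds = (\<lambda>u. {i. (u,i) \<in> S})"
  define N where "N = (\<lambda>u. {y\<in>V. E u y})"
  have IU: "\<And>u. u \<in> V \<Longrightarrow> I u = Cu u \<union> Du u"
    using CR by (auto simp: I_def Cu_def Du_def D_def Rmem)
  have CDdisj: "\<And>u. Cu u \<inter> Du u = {}" by (auto simp: Cu_def Du_def D_def)
  have Ine: "\<And>u. u \<in> V \<Longrightarrow> I u \<noteq> {}"
  proof -
    fix u assume "u \<in> V"
    then obtain p where "p \<in> ({u} \<times> {0..<n}) - S" using assms(9) by blast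
    then show "I u \<noteq> {}" by (auto simp: I_def)
  qed
  have dsI: "\<And>u. u \<in> V \<Longrightarrow> card (ds u) = n - card (I u)"
  proof -
    fix u assume "u \<in> V"
    have "ds u = {0..<n} - I u" using assms(7) by (auto simp: ds_def I_def kron_K_verts_def)
    moreover have "I u \<subseteq> {0..<n}" by (auto simp: I_def)
    ultimately show "card (ds u) = n - card (I u)" by (simp add: card_Diff_subset finite_subset)
  qed
  have sumS: "\<And>T. T \<subseteq> V \<Longrightarrow> (\<Sum>u\<in>T. card (ds u)) \<le> card S"
  proof -
    fix T assume T: "T \<subseteq> V"
    have Seq: "S = Sigma V ds" using assms(7) by (auto simp: ds_def kron_K_verts_def)
    have fds: "\<And>u. finite (ds u)"
    proof -
      fix u have "ds u \<subseteq> {0..<n}" using assms(7) by (auto simp: ds_def kron_K_verts_def)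
      then show "finite (ds u)" by (rule finite_subset) simp
    qed
    have "card S = (\<Sum>u\<in>V. card (ds u))" unfolding Seq using fin fds by (simp add: card_SigmaI)
    moreover have "(\<Sum>u\<in>T. card (ds u)) \<le> (\<Sum>u\<in>V. card (ds u))"
      using T fin by (intro sum_mono2) auto
    ultimately show "(\<Sum>u\<in>T. card (ds u)) \<le> card S" by simp
  qed
  have cross: "\<And>u v i j. E u v \<Longrightarrow> i \<in> Cu u \<Longrightarrow> j \<in> Du v \<Longrightarrow> i = j"
  proof (rule ccontr)
    fix u v i j assume a: "E u v" "i \<in> Cu u" "j \<in> Du v" "i \<noteq> j"
    then have "(u,i) \<in> C" "(v,j) \<in> R" "(v,j) \<notin> C" by (auto simp: Cu_def Du_def D_def)
    moreover have "E' (u,i) (v,j)" using a by (simp add: E'iff)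
    ultimately show False using Cclos by blast
  qed
  have cross2: "\<And>u v i j. E u v \<Longrightarrow> i \<in> Cu u \<Longrightarrow> j \<in> Du v \<Longrightarrow> Cu u = {j} \<and> Du v = {i}"
  proof -
    fix u v i j assume a: "E u v" "i \<in> Cu u" "j \<in> Du v"
    have "\<forall>i'\<in>Cu u. i' = j" using cross a by blast
    moreover have "\<forall>j'\<in>Du v. i = j'" using cross a by blast
    ultimately show "Cu u = {j} \<and> Du v = {i}" using a cross by blast
  qed
  have deg: "\<And>u. u \<in> V \<Longrightarrow> \<delta> \<le> card (N u)"
    using deg_ge[OF assms(1)] by (simp add: \<delta>_def N_def)
  have finN: "\<And>u. finite (N u)" using fin by (simp add: N_def)
  have NV: "\<And>u. N u \<subseteq> V" by (auto simp: N_def)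
  have uN: "\<And>u. u \<notin> N u" using irr by (auto simp: N_def)
  define P where "P = {u\<in>V. Cu u \<noteq> {}}"
  define Q where "Q = {u\<in>V. Du u \<noteq> {}}"
  define M where "M = P \<inter> Q"
  have PQV: "V = P \<union> Q" using IU Ine by (auto simp: P_def Q_def)
  have Qne: "Q \<noteq> {}"
  proof -
    obtain a b where "y0 = (a,b)" by fastforce
    then have "a \<in> V" "b \<in> Du a" using y0D CR y0R by (auto simp: Du_def Rmem)
    then show ?thesis by (auto simp: Q_def)
  qed
  have dpos: "\<delta> > 0" using assms(5) by (simp add: \<delta>_def)
  have cardS: "card S = (n - 1) * \<delta>" using assms(8) by (simp add: \<delta>_def)
  show False
  proof (cases "M = {}")
    case True
    define X where "X = {u\<in>P. \<exists>v\<in>Q. E u v}"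
    define Y where "Y = {u\<in>Q. \<exists>v\<in>P. E u v}"
    have PQd: "P \<inter> Q = {}" using True by (simp add: M_def)
    have X1: "\<And>u. u \<in> X \<Longrightarrow> card (I u) = 1"
    proof -
      fix u assume "u \<in> X"
      then obtain v j where "u \<in> P" "v \<in> Q" "E u v" "j \<in> Du v" "u \<in> V"
        by (auto simp: X_def Q_def P_def)
      then obtain i where "i \<in> Cu u" by (auto simp: P_def)
      then have "Cu u = {j}" using cross2 \<open>E u v\<close> \<open>j \<in> Du v\<close> by blast
      moreover have "Du u = {}" using \<open>u \<in> P\<close> PQd \<open>u \<in> V\<close> by (auto simp: Q_def)
      ultimately show "card (I u) = 1" using IU \<open>u \<in> V\<close> by simp
    qed
    have Y1: "\<And>u. u \<in> Y \<Longrightarrow> card (I u) = 1"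
    proof -
      fix u assume "u \<in> Y"
      then obtain v i where "u \<in> Q" "v \<in> P" "E v u" "i \<in> Cu v" "u \<in> V"
        using sym by (auto simp: Y_def Q_def P_def)
      then obtain j where "j \<in> Du u" by (auto simp: Q_def)
      then have "Du u = {i}" using cross2 \<open>E v u\<close> \<open>i \<in> Cu v\<close> by blast
      moreover have "Cu u = {}" using \<open>u \<in> Q\<close> PQd \<open>u \<in> V\<close> by (auto simp: P_def)
      ultimately show "card (I u) = 1" using IU \<open>u \<in> V\<close> by simp
    qed
    have XV: "X \<subseteq> V" "Y \<subseteq> V" "X \<inter> Y = {}" using PQd by (auto simp: X_def Y_def P_def Q_def)
    have finXY: "finite X" "finite Y" using XV fin finite_subset by blast+
    obtain T where T: "T \<subseteq> V" "\<forall>u\<in>T. card (I u) = 1" "\<delta> + 1 \<le> card T"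
    proof (cases "P - X \<noteq> {}")
      case True
      then obtain a where "a \<in> P" "a \<notin> X" by auto
      obtain b where "b \<in> Q" using Qne by auto
      have "\<not> connected_graph (V - X) E"
        using sep[OF PQV PQd \<open>a \<in> P\<close> \<open>a \<notin> X\<close> \<open>b \<in> Q\<close> X_def] .
      from vc_le[OF fin XV(1) this] assms(4) have "\<delta> \<le> card X" by (simp add: \<delta>_def)
      then obtain x where "x \<in> X" using dpos by fastforce
      then obtain v where "v \<in> Q" "E x v" "x \<in> P" by (auto simp: X_def)
      then have "v \<in> Y" using sym by (auto simp: Y_def)
      then have "card Y \<ge> 1" using finXY by (metis One_nat_def Suc_leI card_gt_0_iff empty_iff)
      then have "\<delta> + 1 \<le> card (X \<union> Y)" using \<open>\<delta> \<le> card X\<close> finXY XV by (simp add: card_Un_disjoint)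
      then show ?thesis using that[of "X \<union> Y"] XV X1 Y1 by blast
    next
      case F1: False
      show ?thesis
      proof (cases "Q - Y \<noteq> {}")
        case True
        then obtain a where "a \<in> Q" "a \<notin> Y" by auto
        obtain b where "b \<in> P" using x0C CR x0R
          by (metis (mono_tags, lifting) CollectI Cu_def P_def Rmem emptyE surj_pair)
        have "V = Q \<union> P" "Q \<inter> P = {}" using PQV PQd by auto
        from sep[OF this \<open>a \<in> Q\<close> \<open>a \<notin> Y\<close> \<open>b \<in> P\<close> Y_def]
        have "\<not> connected_graph (V - Y) E" .
        from vc_le[OF fin XV(2) this] assms(4) have "\<delta> \<le> card Y" by (simp add: \<delta>_def)
        then obtain x where "x \<in> Y" using dpos by fastforce
        then obtain v where "v \<in> P" "E x v" "x \<in> Q" by (auto simp: Y_def)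
        then have "v \<in> X" using sym by (auto simp: X_def)
        then have "card X \<ge> 1" using finXY by (metis One_nat_def Suc_leI card_gt_0_iff empty_iff)
        then have "\<delta> + 1 \<le> card (X \<union> Y)" using \<open>\<delta> \<le> card Y\<close> finXY XV by (simp add: card_Un_disjoint)
        then show ?thesis using that[of "X \<union> Y"] XV X1 Y1 by blast
      next
        case False
        then have "V = X \<union> Y" using F1 PQV XV by (auto simp: X_def Y_def)
        obtain u where "u \<in> V" using Vne by auto
        have "\<delta> + 1 \<le> card (insert u (N u))" using deg[OF \<open>u \<in> V\<close>] finN uN by simp
        moreover have "insert u (N u) \<subseteq> V" using NV \<open>u \<in> V\<close> by auto
        ultimately show ?thesis using that[of "insert u (N u)"] \<open>V = X \<union> Y\<close> X1 Y1 by blast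
      qed
    qed
    have "(\<Sum>u\<in>T. card (ds u)) = (\<Sum>u\<in>T. n - 1)"
      using T dsI by (intro sum.cong) auto
    also have "\<dots> = card T * (n - 1)" by simp
    finally have "card T * (n - 1) \<le> (n - 1) * \<delta>" using sumS[OF T(1)] cardS by simp
    moreover have "(\<delta> + 1) * (n - 1) \<le> card T * (n - 1)" using T(3) by (rule mult_le_mono1)
    moreover have "(\<delta> + 1) * (n - 1) = (n - 1) * \<delta> + (n - 1)" by (simp add: distrib_right)
    ultimately show False using assms(6) by linarith
  next
    case False
    have Mdef: "\<And>u. u \<in> M \<longleftrightarrow> u \<in> V \<and> Cu u \<noteq> {} \<and> Du u \<noteq> {}"
      by (auto simp: M_def P_def Q_def)
    have F1: "\<And>u. u \<in> M \<Longrightarrow> \<exists>c e. Cu u = {c} \<and> Du u = {e} \<and> c \<noteq> e"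
    proof -
      fix u assume uM: "u \<in> M"
      then obtain c e where ce: "c \<in> Cu u" "e \<in> Du u" "u \<in> V" using Mdef by blast
      have "(u,e) \<in> R" using ce(2) by (auto simp: Du_def D_def)
      then obtain w where "w \<in> R" "E' (u,e) w"
        using assms(10) unfolding isolated_vertex_def R_def E'_def by blast
      moreover obtain v k where "w = (v,k)" by fastforce
      ultimately have w: "(v,k) \<in> R" "E u v" "e \<noteq> k" by (auto simp: E'iff)
      have "(v,k) \<notin> C"
      proof
        assume "(v,k) \<in> C"
        moreover have "E' (v,k) (u,e)" using w sym by (auto simp: E'iff)
        ultimately have "(u,e) \<in> C" using Cclos \<open>(u,e) \<in> R\<close> by blast
        then show False using ce(2) by (auto simp: Du_def D_def)
      qed
      then have "k \<in> Du v" using w by (auto simp: Du_def D_def)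
      then have C1: "Cu u = {k}" using cross2 w(2) ce(1) by blast
      have "(u,c) \<in> C" using ce(1) by (auto simp: Cu_def)
      then have "(u,c) \<in> R" using CR by auto
      then obtain w' where "w' \<in> R" "E' (u,c) w'"
        using assms(10) unfolding isolated_vertex_def R_def E'_def by blast
      moreover obtain v' k' where "w' = (v',k')" by fastforce
      ultimately have w': "(v',k') \<in> R" "E u v'" "c \<noteq> k'" "E' (u,c) (v',k')" by (auto simp: E'iff)
      have "(v',k') \<in> C" using Cclos \<open>(u,c) \<in> C\<close> w' by blast
      then have "k' \<in> Cu v'" by (auto simp: Cu_def)
      then have D1: "Du u = {k'}" using cross2 sym[OF w'(2)] ce(2) by blast
      have "k \<noteq> k'" using C1 D1 CDdisj[of u] by auto
      then show "\<exists>c e. Cu u = {c} \<and> Du u = {e} \<and> c \<noteq> e" using C1 D1 by blast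
    qed
    have CneD: "\<And>u. u \<in> M \<Longrightarrow> Cu u \<noteq> Du u" using F1 by fastforce
    have I2: "\<And>u. u \<in> M \<Longrightarrow> card (I u) = 2"
    proof -
      fix u assume "u \<in> M"
      then obtain c e where "Cu u = {c}" "Du u = {e}" "c \<noteq> e" using F1 by blast
      moreover have "u \<in> V" using \<open>u \<in> M\<close> Mdef by blast
      ultimately show "card (I u) = 2" using IU by simp
    qed
    have F2b: "\<And>u v. u \<in> M \<Longrightarrow> v \<in> M \<Longrightarrow> E u v \<Longrightarrow> Cu v = Du u \<and> Du v = Cu u"
    proof -
      fix u v assume a: "u \<in> M" "v \<in> M" "E u v"
      obtain c e where u: "Cu u = {c}" "Du u = {e}" using F1 a(1) by blast
      obtain c' e' where v: "Cu v = {c'}" "Du v = {e'}" using F1 a(2) by blast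
      have "Du v = {c}" using cross2[OF a(3), of c e'] u v by blast
      moreover have "Cu v = {e}" using cross2[OF sym[OF a(3)], of c' e] u v by blast
      ultimately show "Cu v = Du u \<and> Du v = Cu u" using u by simp
    qed
    have F2a: "\<And>u v. u \<in> M \<Longrightarrow> v \<in> V \<Longrightarrow> v \<notin> M \<Longrightarrow> E u v \<Longrightarrow> card (I v) = 1 \<and> (Cu v = Du u \<or> Du v = Cu u)"
    proof -
      fix u v assume a: "u \<in> M" "v \<in> V" "v \<notin> M" "E u v"
      obtain c e where u: "Cu u = {c}" "Du u = {e}" using F1 a(1) by blast
      show "card (I v) = 1 \<and> (Cu v = Du u \<or> Du v = Cu u)"
      proof (cases "Cu v = {}")
        case True
        then obtain j where j: "j \<in> Du v" using IU Ine a(2) by blast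
        have "Du v = {c}" using cross2[OF a(4), of c j] u j by blast
        then show ?thesis using IU[OF a(2)] True u by simp
      next
        case False
        then have "Du v = {}" using a Mdef by blast
        obtain i where i: "i \<in> Cu v" using False by blast
        have "Cu v = {e}" using cross2[OF sym[OF a(4)], of i e] u i by blast
        then show ?thesis using IU[OF a(2)] \<open>Du v = {}\<close> u by simp
      qed
    qed
    have dsN: "\<And>u v. u \<in> M \<Longrightarrow> v \<in> N u \<Longrightarrow> n - 2 \<le> card (ds v) \<and> (v \<notin> M \<longrightarrow> card (ds v) = n - 1)"
    proof -
      fix u v assume a: "u \<in> M" "v \<in> N u"
      then have v: "v \<in> V" "E u v" by (auto simp: N_def)
      show "n - 2 \<le> card (ds v) \<and> (v \<notin> M \<longrightarrow> card (ds v) = n - 1)"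
        using I2[of v] F2a[OF a(1) v(1) _ v(2)] dsI[OF v(1)] by (cases "v \<in> M") auto
    qed
    have disjN: "\<And>x x'. x \<in> M \<Longrightarrow> x' \<in> M \<Longrightarrow> E x x' \<Longrightarrow> N x \<inter> N x' = {}"
    proof (rule ccontr)
      fix x x' assume a: "x \<in> M" "x' \<in> M" "E x x'" "N x \<inter> N x' \<noteq> {}"
      then obtain z where z: "z \<in> V" "E x z" "E x' z" by (auto simp: N_def)
      have xx': "Cu x' = Du x" "Du x' = Cu x" using F2b[OF a(1,2,3)] by auto
      show False
      proof (cases "z \<in> M")
        case True
        then show False using F2b[OF a(1) True z(2)] F2b[OF a(2) True z(3)] xx' CneD[OF a(1)] by simp
      next
        case False
        have "Cu z = Du x \<or> Du z = Cu x" using F2a[OF a(1) z(1) False z(2)] by simp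
        moreover have "Cu z = Du x' \<or> Du z = Cu x'" using F2a[OF a(2) z(1) False z(3)] by simp
        moreover have "\<not> (Cu z \<noteq> {} \<and> Du z \<noteq> {})" using False z(1) Mdef by blast
        moreover have "Cu x \<noteq> {}" "Du x \<noteq> {}" using a(1) Mdef by auto
        ultimately show False using xx' CneD[OF a(1)] by auto
      qed
    qed
    have nn: "(n - 1) * \<delta> \<le> (n - 2) * (2 * \<delta>)"
    proof -
      have "n - 1 \<le> (n - 2) * 2" using assms(6) by simp
      then have "(n - 1) * \<delta> \<le> ((n - 2) * 2) * \<delta>" by (rule mult_le_mono1)
      then show ?thesis by (simp add: algebra_simps)
    qed
    have closedM: "\<And>x v. x \<in> M \<Longrightarrow> v \<in> V \<Longrightarrow> E x v \<Longrightarrow> v \<in> M"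
    proof (rule ccontr)
      fix x w assume a: "x \<in> M" "w \<in> V" "E x w" "w \<notin> M"
      have xV: "x \<in> V" using a(1) Mdef by blast
      have wN: "w \<in> N x" using a by (simp add: N_def)
      show False
      proof (cases "\<exists>x'\<in>M. E x x'")
        case True
        then obtain x' where x': "x' \<in> M" "E x x'" by blast
        have x'V: "x' \<in> V" using x'(1) Mdef by blast
        have s1: "(n - 2) * card (N x) + 1 \<le> (\<Sum>v\<in>N x. card (ds v))"
        proof -
          have e1: "(\<Sum>v\<in>N x. card (ds v)) = card (ds w) + (\<Sum>v\<in>N x - {w}. card (ds v))"
            using wN finN by (simp add: sum.remove)
          have e2: "card (N x - {w}) * (n - 2) \<le> (\<Sum>v\<in>N x - {w}. card (ds v))"
            using dsN[OF a(1)] sum_bounded_below[of "N x - {w}" "n - 2" "\<lambda>v. card (ds v)"] by simp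
          have e3: "card (ds w) = n - 1" using dsN[OF a(1) wN] a(4) by simp
          have "card (N x) > 0" using wN finN card_gt_0_iff by blast
          then have e4: "card (N x) = card (N x - {w}) + 1" using wN finN by (simp add: card_Diff_singleton)
          have e5: "(n - 2) * (card (N x - {w}) + 1) = card (N x - {w}) * (n - 2) + (n - 2)"
            by (simp only: distrib_left mult.commute mult_1_right)
          have e6: "n - 1 = (n - 2) + 1" using assms(6) by simp
          show ?thesis unfolding e1 e3 e4 e5 using e2 e6 by linarith
        qed
        have s2: "(n - 2) * card (N x') \<le> (\<Sum>v\<in>N x'. card (ds v))"
          using dsN[OF x'(1)] sum_bounded_below[of "N x'" "n - 2" "\<lambda>v. card (ds v)"] by (simp add: mult.commute)
        have "(\<Sum>v\<in>N x \<union> N x'. card (ds v)) = (\<Sum>v\<in>N x. card (ds v)) + (\<Sum>v\<in>N x'. card (ds v))"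
          using disjN[OF a(1) x'] finN by (simp add: sum.union_disjoint)
        moreover have "(\<Sum>v\<in>N x \<union> N x'. card (ds v)) \<le> (n - 1) * \<delta>" using sumS[of "N x \<union> N x'"] NV cardS by simp
        moreover have "(n - 2) * \<delta> \<le> (n - 2) * card (N x)" using deg[OF xV] by simp
        moreover have "(n - 2) * \<delta> \<le> (n - 2) * card (N x')" using deg[OF x'V] by simp
        ultimately show False using s1 s2 nn by linarith
      next
        case False
        then have nm: "\<And>v. v \<in> N x \<Longrightarrow> card (ds v) = n - 1"
          using dsN[OF a(1)] by (auto simp: N_def)
        have "(\<Sum>v\<in>insert x (N x). card (ds v)) = card (ds x) + (\<Sum>v\<in>N x. card (ds v))"
          using finN uN by simp
        also have "(\<Sum>v\<in>N x. card (ds v)) = card (N x) * (n - 1)" using nm by simp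
        finally have "card (ds x) + card (N x) * (n - 1) \<le> (n - 1) * \<delta>"
          using sumS[of "insert x (N x)"] NV xV cardS by simp
        moreover have "card (ds x) = n - 2" using I2[OF a(1)] dsI[OF xV] by simp
        moreover have "\<delta> * (n - 1) \<le> card (N x) * (n - 1)" using deg[OF xV] by (rule mult_le_mono1)
        moreover have "(n - 1) * \<delta> = \<delta> * (n - 1)" by (rule mult.commute)
        ultimately show False using assms(6) by linarith
      qed
    qed
    obtain m0 where m0: "m0 \<in> M" using False by blast
    have m0V: "m0 \<in> V" using m0 Mdef by blast
    obtain c0 e0 where ce0: "Cu m0 = {c0}" "Du m0 = {e0}" "c0 \<noteq> e0" using F1[OF m0] by blast
    have reach: "y \<in> M \<and> ((Cu y = {c0} \<and> Du y = {e0}) \<or> (Cu y = {e0} \<and> Du y = {c0}))"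
      if "(adj_in V E)\<^sup>*\<^sup>* m0 y" for y
      using that
    proof (induction rule: rtranclp_induct)
      case base then show ?case using m0 ce0 by simp
    next
      case (step y z)
      then have "z \<in> V" "E y z" "y \<in> M" by (auto simp: adj_in_def)
      then have "z \<in> M" using closedM by blast
      then show ?case using F2b[OF \<open>y \<in> M\<close> \<open>z \<in> M\<close> \<open>E y z\<close>] step.IH by auto
    qed
    have allV: "\<And>y. y \<in> V \<Longrightarrow> y \<in> M \<and> ((Cu y = {c0} \<and> Du y = {e0}) \<or> (Cu y = {e0} \<and> Du y = {c0}))"
      using reach assms(2) m0V unfolding connected_graph_def by blast
    have "bipartite V E"
      unfolding bipartite_def
    proof (intro exI[of _ "{u\<in>V. Cu u = {c0}}"] conjI ballI impI)
      fix x y assume xy: "x \<in> V" "y \<in> V" "E x y"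
      have "Cu y = Du x" using F2b[OF _ _ xy(3)] allV xy by blast
      then show "(x \<in> {u\<in>V. Cu u = {c0}}) = (y \<notin> {u\<in>V. Cu u = {c0}})"
        using allV[OF xy(1)] xy ce0(3) by auto
    qed auto
    then show False using assms(3) by simp
  qed
qed

end
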